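(* Let $\mathrm{int}(\Delta^n):=\{\mathbf{p}\in\Delta^n:p_i>0\ \forall i\}$. Each of the following proper scoring rules on the forecast domain $\mathcal{D}=\mathrm{int}(\Delta^n)$ has convex exposure: (i) the logarithmic scoring rule $s(\mathbf{p};j)=\ln p_j$ (with $G(\mathbf{p})=\sum_j p_j\ln p_j$); (ii) the scoring rule with $G(\mathbf{p})=-\sum_j p_j^{\gamma}$ for $\gamma\in(0,1)$, and the scoring rule with $G(\mathbf{p})=\sum_j p_j^{\gamma}$ for $\gamma<0$; (iii) the scoring rule with $G(\mathbf{p})=-\sum_j\ln p_j$; (iv) the scoring rule with $G(\mathbf{p})=-\prod_j p_j^{1/n}$.
   Context: A scoring rule "given by" a differentiable strictly convex $G$ on $\mathcal{D}$ is $s(\mathbf{p};j)=G(\mathbf{p})+\langle\nabla G(\mathbf{p}),\delta_j-\mathbf{p}\rangle$, where $\delta_j$ is the $j$-th standard basis vector; this is a proper scoring rule with expected reward function $G$. The exposure function is $\mathbf{g}=\nabla G$, with values understood modulo translation by the all-ones vector (equivalently, projected onto $\{\mathbf{x}:\sum_i x_i=0\}$). A scoring rule has convex exposure if the range of $\mathbf{g}$ is a convex set. *)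

theory Defs
  imports "HOL-Analysis.Analysis"
begin

definition int_simplex :: "(real^'n) set" where
  "int_simplex = {p. (\<forall>i. 0 < p $ i) \<and> (\<Sum>i\<in>UNIV. p $ i) = 1}"

definition sr_gradient :: "(real^'n \<Rightarrow> real) \<Rightarrow> real^'n \<Rightarrow> real^'n" where
  "sr_gradient G p = (\<chi> i. frechet_derivative G (at p) (axis i 1))"

text \<open>Exposure function g = grad G, projected onto the hyperplane sum x_i = 0
  (i.e. taken modulo translation by the all-ones vector).\<close>
definition exposure :: "(real^'n \<Rightarrow> real) \<Rightarrow> real^'n \<Rightarrow> real^'n" where
  "exposure G p = sr_gradient G p
     - ((\<Sum>i\<in>UNIV. sr_gradient G p $ i) / real CARD('n)) *\<^sub>R (\<chi> i. 1)"

definition convex_exposure :: "(real^'n) set \<Rightarrow> (real^'n \<Rightarrow> real) \<Rightarrow> bool" where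
  "convex_exposure D G \<longleftrightarrow> convex (exposure G ` D)"

end

theory Submission
  imports Defs
begin

lemma sr_gradient_eq:
  fixes G :: "real^'n \<Rightarrow> real"
  assumes "(G has_derivative (\<lambda>h. \<Sum>j\<in>UNIV. d $ j * h $ j)) (at p)"
  shows "sr_gradient G p = d"
proof -
  have "frechet_derivative G (at p) = (\<lambda>h. \<Sum>j\<in>UNIV. d $ j * h $ j)"
    using frechet_derivative_at[OF assms] by simp
  then show ?thesis unfolding sr_gradient_def
    by (simp add: vec_eq_iff axis_def if_distrib cong: if_cong)
qed

lemma exposure_shift:
  fixes x :: "real^'n"
  assumes "sr_gradient G p = (\<chi> j. x $ j + c)" "(\<Sum>j\<in>UNIV. x $ j) = 0"
  shows "exposure G p = x"
  unfolding exposure_def assms(1)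
  using assms(2) by (simp add: vec_eq_iff sum.distrib)

lemma exposure_sum0:
  fixes G :: "real^'n \<Rightarrow> real"
  shows "(\<Sum>i\<in>UNIV. exposure G p $ i) = 0"
  unfolding exposure_def by (simp add: sum_subtractf)

lemma convex_H: "convex {x::real^'n. (\<Sum>i\<in>UNIV. x $ i) = 0}"
  unfolding convex_def by (simp add: sum.distrib flip: sum_distrib_left)

lemma conv_main:
  fixes G :: "real^'n \<Rightarrow> real"
  assumes "\<And>x::real^'n. (\<Sum>j\<in>UNIV. x $ j) = 0 \<Longrightarrow> \<exists>p\<in>int_simplex. \<exists>c. sr_gradient G p = (\<chi> j. x $ j + c)"
  shows "convex_exposure int_simplex G"
proof -
  have "exposure G ` int_simplex = {x::real^'n. (\<Sum>i\<in>UNIV. x $ i) = 0}"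
  proof
    show "exposure G ` int_simplex \<subseteq> {x. (\<Sum>i\<in>UNIV. x $ i) = 0}"
      using exposure_sum0 by blast
    show "{x. (\<Sum>i\<in>UNIV. x $ i) = 0} \<subseteq> exposure G ` int_simplex"
    proof
      fix x :: "real^'n" assume "x \<in> {x. (\<Sum>i\<in>UNIV. x $ i) = 0}"
      hence x0: "(\<Sum>i\<in>UNIV. x $ i) = 0" by simp
      then obtain p c where "p \<in> int_simplex" "sr_gradient G p = (\<chi> j. x $ j + c)"
        using assms by blast
      then show "x \<in> exposure G ` int_simplex" using exposure_shift[OF _ x0] by (metis image_eqI)
    qed
  qed
  then show ?thesis unfolding convex_exposure_def using convex_H by simp
qed

lemma deriv_sum:
  fixes p :: "real^'n"
  assumes "\<And>j. (f has_real_derivative f' (p$j)) (at (p$j))"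
  shows "((\<lambda>q::real^'n. \<Sum>j\<in>UNIV. f (q$j)) has_derivative (\<lambda>h. \<Sum>j\<in>UNIV. f' (p$j) * h$j)) (at p)"
proof (rule has_derivative_sum)
  fix j
  have 1: "((\<lambda>q::real^'n. q$j) has_derivative (\<lambda>h. h$j)) (at p)"
    by (rule bounded_linear_imp_has_derivative) (rule bounded_linear_vec_nth)
  have 2: "(f has_derivative (\<lambda>u. f'(p$j) * u)) (at ((\<lambda>q::real^'n. q$j) p))"
    using assms[of j] by (simp add: has_field_derivative_def)
  from diff_chain_at[OF 1 2] show "((\<lambda>q. f (q $ j)) has_derivative (\<lambda>h. f' (p $ j) * h $ j)) (at p)"
    by (simp add: o_def)
qed

lemma grad_sum:
  fixes p :: "real^'n"
  assumes "\<And>j. (f has_real_derivative f' (p$j)) (at (p$j))"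
  shows "sr_gradient (\<lambda>q::real^'n. \<Sum>j\<in>UNIV. f (q$j)) p = (\<chi> j. f' (p$j))"
  by (rule sr_gradient_eq) (use deriv_sum[OF assms] in simp)

lemma grad_nsum:
  fixes p :: "real^'n"
  assumes "\<And>j. (f has_real_derivative f' (p$j)) (at (p$j))"
  shows "sr_gradient (\<lambda>q::real^'n. - (\<Sum>j\<in>UNIV. f (q$j))) p = (\<chi> j. - f' (p$j))"
  by (rule sr_gradient_eq) (use has_derivative_minus[OF deriv_sum[OF assms]] in \<open>simp add: sum_negf\<close>)


lemma ivt_powr:
  fixes x :: "real^'n" and k r :: real
  assumes k: "k > 0" and r: "r > 0"
  shows "\<exists>c. (\<forall>j. x$j < c) \<and> (\<Sum>j\<in>UNIV. ((c - x$j)/k) powr (-r)) = 1"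
proof -
  define M where "M = Max (range (\<lambda>j. x$j))"
  have xM: "x$j \<le> M" for j unfolding M_def by (simp add: Max_ge)
  have "M \<in> range (\<lambda>j. x$j)" unfolding M_def by (rule Max_in) auto
  then obtain j0 where j0: "x$j0 = M" by auto
  define n where "n = real CARD('n)"
  have n1: "n \<ge> 1" unfolding n_def by (simp add: Suc_le_eq)
  define S where "S c = (\<Sum>j\<in>UNIV. ((c - x$j)/k) powr (-r))" for c
  define a where "a = M + k"
  define b where "b = M + k * n powr (1/r)"
  have np: "n powr (1/r) \<ge> 1" using n1 r by (simp add: ge_one_powr_ge_zero)
  have ab: "a \<le> b" unfolding a_def b_def using np k by simp
  have Sa: "1 \<le> S a"
  proof -
    have "1 = ((a - x$j0)/k) powr (-r)" using j0 k unfolding a_def by simp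
    also have "\<dots> \<le> S a" unfolding S_def
      by (rule member_le_sum) auto
    finally show ?thesis .
  qed
  have Sb: "S b \<le> 1"
  proof -
    have "((b - x$j)/k) powr (-r) \<le> 1 / n" for j
    proof -
      have "n powr (1/r) \<le> (b - x$j)/k" using xM[of j] k unfolding b_def
        by (simp add: field_simps)
      then have "((b - x$j)/k) powr (-r) \<le> (n powr (1/r)) powr (-r)"
        using np r by (intro powr_mono2') auto
      also have "\<dots> = 1 / n" using r n1 by (simp add: powr_powr powr_minus_divide)
      finally show ?thesis .
    qed
    then have "S b \<le> (\<Sum>j\<in>(UNIV::'n set). 1 / n)" unfolding S_def by (intro sum_mono) auto
    also have "\<dots> = 1" unfolding n_def by simp
    finally show ?thesis .
  qed
  have cont: "\<forall>c. a \<le> c \<and> c \<le> b \<longrightarrow> isCont S c"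
  proof (intro allI impI)
    fix c assume "a \<le> c \<and> c \<le> b"
    then have "x$j < c" for j using xM[of j] k unfolding a_def by linarith
    then show "isCont S c" unfolding S_def using k
      by (intro continuous_intros) auto
  qed
  obtain c where c: "a \<le> c" "c \<le> b" "S c = 1" using IVT2[of S b 1 a, OF Sb Sa ab cont] by blast
  have "x$j < c" for j using xM[of j] k c(1) unfolding a_def by linarith
  then show ?thesis using c(3) unfolding S_def by blast
qed


lemma simplex_of:
  fixes p :: "real^'n"
  assumes "\<And>j. 0 < p$j" "(\<Sum>j\<in>UNIV. p$j) = 1"
  shows "p \<in> int_simplex"
  using assms unfolding int_simplex_def by auto

lemma case_log:
  "convex_exposure (int_simplex :: (real^'n) set) (\<lambda>p. \<Sum>j\<in>UNIV. p $ j * ln (p $ j))"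
proof (rule conv_main)
  fix x :: "real^'n"
  define Z where "Z = (\<Sum>j\<in>UNIV. exp (x$j))"
  have Z: "Z > 0" unfolding Z_def by (intro sum_pos) auto
  define p :: "real^'n" where "p = (\<chi> j. exp (x$j) / Z)"
  have pp: "0 < p$j" for j unfolding p_def using Z by simp
  have "p \<in> int_simplex"
    by (rule simplex_of[OF pp]) (use Z in \<open>simp add: p_def Z_def flip: sum_divide_distrib\<close>)
  moreover have "sr_gradient (\<lambda>p. \<Sum>j\<in>UNIV. p $ j * ln (p $ j)) p = (\<chi> j. x$j + (1 - ln Z))"
  proof -
    have "((\<lambda>t. t * ln t) has_real_derivative (ln (p$j) + 1)) (at (p$j))" for j
      using pp[of j] by (auto intro!: derivative_eq_intros)
    then have "sr_gradient (\<lambda>p. \<Sum>j\<in>UNIV. p $ j * ln (p $ j)) p = (\<chi> j. ln (p$j) + 1)"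
      by (rule grad_sum)
    also have "\<dots> = (\<chi> j. x$j + (1 - ln Z))" unfolding p_def using Z by (simp add: ln_div algebra_simps)
    finally show ?thesis .
  qed
  ultimately show "\<exists>p\<in>int_simplex. \<exists>c. sr_gradient (\<lambda>p. \<Sum>j\<in>UNIV. p $ j * ln (p $ j)) p = (\<chi> j. x $ j + c)"
    by blast
qed

lemma pt_powr:
  fixes x :: "real^'n" and k r :: real
  assumes k: "k > 0" and r: "r > 0"
  obtains c p where "p \<in> int_simplex" "\<And>j. x$j < c" "\<And>j. p$j = ((c - x$j)/k) powr (-r)"
proof -
  obtain c where c: "\<forall>j. x$j < c" "(\<Sum>j\<in>UNIV. ((c - x$j)/k) powr (-r)) = 1"
    using ivt_powr[OF k r] by blast
  define p :: "real^'n" where "p = (\<chi> j. ((c - x$j)/k) powr (-r))"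
  have "p \<in> int_simplex" by (rule simplex_of) (use c k in \<open>auto simp: p_def\<close>)
  moreover have "p$j = ((c - x$j)/k) powr (-r)" for j unfolding p_def by simp
  ultimately show ?thesis using that c by blast
qed

lemma case_pow1:
  fixes \<gamma> :: real assumes g: "0 < \<gamma>" "\<gamma> < 1"
  shows "convex_exposure (int_simplex :: (real^'n) set) (\<lambda>p. - (\<Sum>j\<in>UNIV. p $ j powr \<gamma>))"
proof (rule conv_main)
  fix x :: "real^'n"
  obtain c p where p: "p \<in> int_simplex" "\<And>j. x$j < c" "\<And>j. p$j = ((c - x$j)/\<gamma>) powr (-(1/(1-\<gamma>)))"
  proof -
    have k: "0 < \<gamma>" "0 < 1/(1-\<gamma>)" using g by auto
    show ?thesis by (rule pt_powr[OF k, of x]) (rule that)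
  qed
  have pp: "0 < p$j" for j using p(1) unfolding int_simplex_def by auto
  have "((\<lambda>t. t powr \<gamma>) has_real_derivative (\<gamma> * p$j powr (\<gamma> - 1))) (at (p$j))" for j
    using pp[of j] by (rule has_real_derivative_powr)
  then have "sr_gradient (\<lambda>p. - (\<Sum>j\<in>UNIV. p $ j powr \<gamma>)) p = (\<chi> j. - (\<gamma> * p$j powr (\<gamma> - 1)))"
    by (rule grad_nsum)
  also have "\<dots> = (\<chi> j. x$j + (- c))"
  proof -
    have "p$j powr (\<gamma> - 1) = (c - x$j)/\<gamma>" for j
    proof -
      have "p$j powr (\<gamma> - 1) = ((c - x$j)/\<gamma>) powr (-(1/(1-\<gamma>)) * (\<gamma> - 1))"
        unfolding p(3) by (simp add: powr_powr)
      also have "-(1/(1-\<gamma>)) * (\<gamma> - 1) = 1" using g by (simp add: field_simps)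
      finally show ?thesis using p(2)[of j] g by simp
    qed
    then show ?thesis using g by (simp add: vec_eq_iff)
  qed
  finally show "\<exists>p\<in>int_simplex. \<exists>c. sr_gradient (\<lambda>p. - (\<Sum>j\<in>UNIV. p $ j powr \<gamma>)) p = (\<chi> j. x $ j + c)"
    using p(1) by blast
qed

lemma case_pow2:
  fixes \<gamma> :: real assumes g: "\<gamma> < 0"
  shows "convex_exposure (int_simplex :: (real^'n) set) (\<lambda>p. \<Sum>j\<in>UNIV. p $ j powr \<gamma>)"
proof (rule conv_main)
  fix x :: "real^'n"
  obtain c p where p: "p \<in> int_simplex" "\<And>j. x$j < c" "\<And>j. p$j = ((c - x$j)/(-\<gamma>)) powr (-(1/(1-\<gamma>)))"
  proof -
    have k: "0 < -\<gamma>" "0 < 1/(1-\<gamma>)" using g by auto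
    show ?thesis by (rule pt_powr[OF k, of x]) (rule that)
  qed
  have pp: "0 < p$j" for j using p(1) unfolding int_simplex_def by auto
  have "((\<lambda>t. t powr \<gamma>) has_real_derivative (\<gamma> * p$j powr (\<gamma> - 1))) (at (p$j))" for j
    using pp[of j] by (rule has_real_derivative_powr)
  then have "sr_gradient (\<lambda>p. \<Sum>j\<in>UNIV. p $ j powr \<gamma>) p = (\<chi> j. \<gamma> * p$j powr (\<gamma> - 1))"
    by (rule grad_sum)
  also have "\<dots> = (\<chi> j. x$j + (- c))"
  proof -
    have "p$j powr (\<gamma> - 1) = (c - x$j)/(-\<gamma>)" for j
    proof -
      have "p$j powr (\<gamma> - 1) = ((c - x$j)/(-\<gamma>)) powr (-(1/(1-\<gamma>)) * (\<gamma> - 1))"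
        unfolding p(3) by (simp add: powr_powr)
      also have "-(1/(1-\<gamma>)) * (\<gamma> - 1) = 1" using g by (simp add: field_simps)
      finally show ?thesis using p(2)[of j] g by simp
    qed
    then show ?thesis using g by (simp add: vec_eq_iff)
  qed
  finally show "\<exists>p\<in>int_simplex. \<exists>c. sr_gradient (\<lambda>p. \<Sum>j\<in>UNIV. p $ j powr \<gamma>) p = (\<chi> j. x $ j + c)"
    using p(1) by blast
qed

lemma case_ln:
  shows "convex_exposure (int_simplex :: (real^'n) set) (\<lambda>p. - (\<Sum>j\<in>UNIV. ln (p $ j)))"
proof (rule conv_main)
  fix x :: "real^'n"
  obtain c p where p: "p \<in> int_simplex" "\<And>j. x$j < c" "\<And>j. p$j = ((c - x$j)/1) powr (-1)"
  proof -
    have k: "0 < (1::real)" "0 < (1::real)" by auto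
    show ?thesis by (rule pt_powr[OF k, of x]) (rule that)
  qed
  have pp: "0 < p$j" for j using p(1) unfolding int_simplex_def by auto
  have "(ln has_real_derivative (1 / p$j)) (at (p$j))" for j
    using pp[of j] by (auto intro!: derivative_eq_intros)
  then have "sr_gradient (\<lambda>p. - (\<Sum>j\<in>UNIV. ln (p $ j))) p = (\<chi> j. - (1 / p$j))"
    by (rule grad_nsum)
  also have "\<dots> = (\<chi> j. x$j + (- c))"
    using p(2,3) by (simp add: vec_eq_iff powr_minus_divide) (metis abs_of_pos diff_gt_0_iff_gt minus_diff_eq)
  finally show "\<exists>p\<in>int_simplex. \<exists>c. sr_gradient (\<lambda>p. - (\<Sum>j\<in>UNIV. ln (p $ j))) p = (\<chi> j. x $ j + c)"
    using p(1) by blast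
qed


lemma deriv_comp:
  fixes p :: "real^'n"
  assumes "(f has_real_derivative D) (at (p$j))"
  shows "((\<lambda>q::real^'n. f (q$j)) has_derivative (\<lambda>h. D * h$j)) (at p)"
proof -
  have 1: "((\<lambda>q::real^'n. q$j) has_derivative (\<lambda>h. h$j)) (at p)"
    by (rule bounded_linear_imp_has_derivative) (rule bounded_linear_vec_nth)
  have 2: "(f has_derivative (\<lambda>u. D * u)) (at ((\<lambda>q::real^'n. q$j) p))"
    using assms by (simp add: has_field_derivative_def)
  from diff_chain_at[OF 1 2] show ?thesis by (simp add: o_def)
qed

lemma grad_prod:
  fixes p :: "real^'n" and e :: real
  assumes pp: "\<And>j. 0 < p$j"
  shows "sr_gradient (\<lambda>q::real^'n. - (\<Prod>j\<in>UNIV. q$j powr e)) p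
     = (\<chi> i. - (e * (\<Prod>j\<in>UNIV. p$j powr e) / p$i))"
proof (rule sr_gradient_eq)
  define P where "P = (\<Prod>j\<in>UNIV. p$j powr e)"
  have d: "((\<lambda>q::real^'n. q$j powr e) has_derivative (\<lambda>h. (e * p$j powr (e - 1)) * h$j)) (at p)" for j
    by (rule deriv_comp) (rule has_real_derivative_powr[OF pp])
  have D: "((\<lambda>q::real^'n. - (\<Prod>j\<in>UNIV. q$j powr e)) has_derivative
     (\<lambda>h. - (\<Sum>i\<in>UNIV. (e * p$i powr (e - 1)) * h$i * (\<Prod>j\<in>UNIV - {i}. p$j powr e)))) (at p)"
    by (intro has_derivative_minus has_derivative_prod d)
  have eq: "(e * p$i powr (e - 1)) * h$i * (\<Prod>j\<in>UNIV - {i}. p$j powr e) = (\<chi> i. - (e * P / p$i)) $ i * h$i * (-1)" for i h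
  proof -
    have "P = p$i powr e * (\<Prod>j\<in>UNIV - {i}. p$j powr e)" unfolding P_def
      by (simp add: prod.remove)
    moreover have "p$i powr (e - 1) = p$i powr e / p$i" using pp[of i] by (simp add: powr_diff)
    ultimately show ?thesis using pp[of i] by (simp add: field_simps)
  qed
  show "((\<lambda>q::real^'n. - (\<Prod>j\<in>UNIV. q$j powr e)) has_derivative
     (\<lambda>h. \<Sum>j\<in>UNIV. (\<chi> i. - (e * (\<Prod>j\<in>UNIV. p$j powr e) / p$i)) $ j * h $ j)) (at p)"
    using D unfolding eq P_def by (simp add: sum_negf)
qed


lemma ivt_prod:
  fixes x :: "real^'n"
  shows "\<exists>c. (\<forall>j. x$j < c) \<and> (\<Prod>j\<in>UNIV. (c - x$j)) = 1 / real CARD('n) ^ CARD('n)"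
proof -
  define N where "N = CARD('n)"
  define n where "n = real N"
  have n1: "n \<ge> 1" unfolding n_def N_def by (simp add: Suc_le_eq)
  define T where "T = 1 / n ^ N"
  have T1: "T \<le> 1" "0 < T" unfolding T_def using n1 by auto
  define M where "M = Max (range (\<lambda>j. x$j))"
  have xM: "x$j \<le> M" for j unfolding M_def by (simp add: Max_ge)
  have "M \<in> range (\<lambda>j. x$j)" unfolding M_def by (rule Max_in) auto
  then obtain j0 where j0: "x$j0 = M" by auto
  define m where "m = Min (range (\<lambda>j. x$j))"
  have xm: "m \<le> x$j" for j unfolding m_def by (simp add: Min_le)
  define D where "D = M + 1 - m"
  have D1: "D \<ge> 1" unfolding D_def using xM[of j0] xm[of j0] by simp
  define h where "h c = (\<Prod>j\<in>UNIV. (c - x$j))" for c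
  define \<delta> where "\<delta> = 1 / (n * D) ^ N"
  have nD: "(n * D) ^ N \<ge> 1" using n1 D1 by (intro one_le_power) (metis mult_mono one_le_mult_iff order.trans zero_le_one mult_1_right)
  have d: "0 < \<delta>" "\<delta> \<le> 1" unfolding \<delta>_def using nD by auto
  define a where "a = M + \<delta>"
  define b where "b = M + 1"
  have ab: "a \<le> b" unfolding a_def b_def using d by simp
  have hb: "T \<le> h b"
  proof -
    have "1 \<le> h b" unfolding h_def b_def using xM by (intro prod_ge_1) (smt (verit))
    then show ?thesis using T1 by simp
  qed
  have ha: "h a \<le> T"
  proof -
    have "h a = (a - x$j0) * (\<Prod>j\<in>UNIV - {j0}. (a - x$j))" unfolding h_def
      by (simp add: prod.remove)
    also have "\<dots> = \<delta> * (\<Prod>j\<in>UNIV - {j0}. (a - x$j))" using j0 unfolding a_def by simp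
    also have "\<dots> \<le> \<delta> * (\<Prod>j\<in>UNIV - {j0}. D)"
    proof (intro mult_left_mono prod_mono conjI)
      fix j show "0 \<le> a - x$j" "a - x$j \<le> D" using xM[of j] xm[of j] d unfolding a_def D_def by auto
    qed (use d in auto)
    also have "\<dots> = \<delta> * D ^ (N - 1)" unfolding N_def by (simp add: card_Diff_subset)
    also have "\<dots> \<le> \<delta> * D ^ N" using D1 d by (intro mult_left_mono power_increasing) auto
    also have "\<dots> = T" unfolding \<delta>_def T_def using n1 D1 by (simp add: power_mult_distrib)
    finally show ?thesis .
  qed
  have cont: "\<forall>c. a \<le> c \<and> c \<le> b \<longrightarrow> isCont h c" unfolding h_def
    by (intro allI impI continuous_intros)
  obtain c where c: "a \<le> c" "c \<le> b" "h c = T" using IVT[of h a T b, OF ha hb ab cont] by blast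
  have "x$j < c" for j using xM[of j] d c(1) unfolding a_def by linarith
  then show ?thesis using c(3) unfolding h_def T_def n_def N_def by blast
qed

lemma case_geo:
  shows "convex_exposure (int_simplex :: (real^'n) set)
         (\<lambda>p. - (\<Prod>j\<in>UNIV. p $ j powr (1 / real CARD('n))))"
proof (rule conv_main)
  fix x :: "real^'n"
  define N where "N = CARD('n)"
  define n where "n = real N"
  have n1: "n \<ge> 1" unfolding n_def N_def by (simp add: Suc_le_eq)
  define e where "e = 1 / n"
  obtain c where c: "\<forall>j. x$j < c" "(\<Prod>j\<in>UNIV. (c - x$j)) = 1 / n ^ N"
    using ivt_prod[of x] unfolding n_def N_def by blast
  define q :: "real^'n" where "q = (\<chi> j. 1 / (c - x$j))"
  have qp: "0 < q$j" for j unfolding q_def using c(1) by simp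
  define L where "L = 1 / (\<Sum>j\<in>UNIV. q$j)"
  have sq: "0 < (\<Sum>j\<in>UNIV. q$j)" by (intro sum_pos) (use qp in auto)
  have l: "0 < L" unfolding L_def using sq by simp
  define p :: "real^'n" where "p = L *\<^sub>R q"
  have pp: "0 < p$j" for j unfolding p_def using l qp by simp
  have ps: "p \<in> int_simplex"
    by (rule simplex_of[OF pp]) (use sq in \<open>simp add: p_def L_def flip: sum_divide_distrib\<close>)
  have Pq: "(\<Prod>j\<in>UNIV. q$j powr e) = n"
  proof -
    have "(\<Prod>j\<in>UNIV. q$j powr e) = (\<Prod>j\<in>UNIV. q$j) powr e" by (simp add: prod_powr_distrib)
    also have "(\<Prod>j\<in>UNIV. q$j) = n ^ N" unfolding q_def using c(2) n1
      by (simp add: prod_dividef)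
    also have "(n ^ N) powr e = n" unfolding e_def using n1
      by (simp add: powr_realpow[symmetric] powr_powr n_def)
    finally show ?thesis .
  qed
  have P: "(\<Prod>j\<in>UNIV. p$j powr e) = L * n"
  proof -
    have "(\<Prod>j\<in>UNIV. p$j powr e) = (\<Prod>j\<in>UNIV. L powr e * q$j powr e)"
      unfolding p_def using l qp by (simp add: powr_mult less_imp_le)
    also have "\<dots> = (L powr e) ^ N * n" by (simp add: prod.distrib Pq N_def)
    also have "(L powr e) ^ N = L" unfolding e_def using l n1
      by (simp add: powr_realpow[symmetric] powr_powr n_def)
    finally show ?thesis .
  qed
  have "sr_gradient (\<lambda>p::real^'n. - (\<Prod>j\<in>UNIV. p $ j powr (1 / real CARD('n)))) p
      = (\<chi> i. - (e * (\<Prod>j\<in>UNIV. p$j powr e) / p$i))"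
    using grad_prod[OF pp, of e] unfolding e_def n_def N_def by simp
  also have "\<dots> = (\<chi> j. x$j + (- c))"
    unfolding P using l n1 c(1) by (simp add: vec_eq_iff p_def q_def e_def field_simps)
  finally show "\<exists>p\<in>int_simplex. \<exists>c. sr_gradient (\<lambda>p::real^'n. - (\<Prod>j\<in>UNIV. p $ j powr (1 / real CARD('n)))) p = (\<chi> j. x $ j + c)"
    using ps by blast
qed

theorem corollaryF2:
  shows "convex_exposure (int_simplex :: (real^'n) set) (\<lambda>p. \<Sum>j\<in>UNIV. p $ j * ln (p $ j))
    \<and> (\<forall>\<gamma>::real. 0 < \<gamma> \<and> \<gamma> < 1 \<longrightarrow>
         convex_exposure (int_simplex :: (real^'n) set) (\<lambda>p. - (\<Sum>j\<in>UNIV. p $ j powr \<gamma>)))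
    \<and> (\<forall>\<gamma>::real. \<gamma> < 0 \<longrightarrow>
         convex_exposure (int_simplex :: (real^'n) set) (\<lambda>p. \<Sum>j\<in>UNIV. p $ j powr \<gamma>))
    \<and> convex_exposure (int_simplex :: (real^'n) set) (\<lambda>p. - (\<Sum>j\<in>UNIV. ln (p $ j)))
    \<and> convex_exposure (int_simplex :: (real^'n) set)
         (\<lambda>p. - (\<Prod>j\<in>UNIV. p $ j powr (1 / real CARD('n))))"
  using case_log case_pow1 case_pow2 case_ln case_geo by blast

end
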